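(* Let $h$ be an integer with $1\le h\le u$. If $\beta$ is a root of $S(X)$ of multiplicity at least $2^h$, then for every $j\in\{0,1,\dots,2^h-1\}$ \[ 1+K\big(\eta_{j/2^h}\chi\big)\equiv 0\pmod{2\mathcal{P}\,\mathbb{Z}[\zeta_{2^hk}]}. \]
   Context: Let $p$ be an odd prime, $m\ge1$, $q=p^m$, $\alpha$ a primitive element of $\mathbb{F}_q$, and $T=q-1$; write $T=2^uT'$ with $u\ge1$ and $T'$ odd. The binary SLCE sequence $(s_n)_{n\ge0}$ is defined as follows: $s_n=1$ if $\alpha^n+1$ is a nonzero non-square of $\mathbb{F}_q$, and $s_n=0$ otherwise. Put $S(X)=\sum_{n=0}^{T-1}s_nX^n\in\mathbb{F}_2[X]$. Multiplicities of roots are taken in $\overline{\mathbb{F}_2}[X]$. Let $\beta$ be an element of an algebraic closure of $\mathbb{F}_2$ with $\beta^T=1$ and multiplicative order $k>1$ (so $k$ is odd). Let $f$ be the order of $2$ modulo $k$, and write $\zeta_N=e^{2\pi i/N}$. Let $\mathcal{P}$ be a prime ideal of $\mathbb{Z}[\zeta_k]$ containing $2$. Fix a field isomorphism $\phi:\mathbb{F}_2(\beta)=\mathbb{F}_{2^f}\to\mathbb{Z}[\zeta_k]/\mathcal{P}$, and let $\zeta$ be the unique complex $k$-th root of unity with $\phi(\beta)=\zeta+\mathcal{P}$. Multiplicative characters of $\mathbb{F}_q$ are homomorphisms $\mathbb{F}_q^*\to\mathbb{C}^*$, extended by value $0$ at $0$. For a rational $j$ with $(q-1)j\in\mathbb{Z}$,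 $\eta_j$ is the character with $\eta_j(\alpha)=e^{2\pi ij}$. Let $\rho=\eta_{1/2}$ be the quadratic character. Let $\chi$ be the character with $\chi(\alpha^n)=\zeta^n$. For a character $\psi$, set $K(\psi)=\sum_{x\in\mathbb{F}_q}\rho(x)\psi(1-x)$. For an ideal $I$ of $\mathbb{Z}[\zeta_k]$, $I\,\mathbb{Z}[\zeta_{2^hk}]$ is the ideal it generates in $\mathbb{Z}[\zeta_{2^hk}]$. *)

theory Defs
  imports Complex_Main "HOL-Library.Z2" "HOL-Algebra.Algebraic_Closure_Type" "HOL-Algebra.Generated_Fields"
begin

definition slce :: "'a::{field,finite} \<Rightarrow> nat \<Rightarrow> bool" where
  "slce \<alpha> n \<longleftrightarrow> \<alpha> ^ n + 1 \<noteq> 0 \<and> \<not> (\<exists>y. y * y = \<alpha> ^ n + 1)"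

definition slce_poly :: "'a::{field,finite} \<Rightarrow> bit poly" where
  "slce_poly \<alpha> = (\<Sum>n<card (UNIV :: 'a set) - 1. monom (if slce \<alpha> n then 1 else 0) n)"

definition dlog :: "'a::{field,finite} \<Rightarrow> 'a \<Rightarrow> nat" where
  "dlog \<alpha> x = (LEAST n. \<alpha> ^ n = x)"

definition mchar :: "'a::{field,finite} \<Rightarrow> complex \<Rightarrow> 'a \<Rightarrow> complex" where
  "mchar \<alpha> c x = (if x = 0 then 0 else c ^ dlog \<alpha> x)"

definition eta :: "'a::{field,finite} \<Rightarrow> real \<Rightarrow> 'a \<Rightarrow> complex" where
  "eta \<alpha> j = mchar \<alpha> (exp (2 * of_real pi * \<i> * of_real j))"

definition rho :: "'a::{field,finite} \<Rightarrow> 'a \<Rightarrow> complex" where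
  "rho \<alpha> = eta \<alpha> (1/2)"

definition Ksum :: "'a::{field,finite} \<Rightarrow> ('a \<Rightarrow> complex) \<Rightarrow> complex" where
  "Ksum \<alpha> \<psi> = (\<Sum>x\<in>UNIV. rho \<alpha> x * \<psi> (1 - x))"

definition zeta :: "nat \<Rightarrow> complex" where
  "zeta N = exp (2 * of_real pi * \<i> / of_nat N)"

definition Zzeta :: "nat \<Rightarrow> complex set" where
  "Zzeta N = {poly (map_poly of_int p) (zeta N) | p :: int poly. True}"

definition zring :: "nat \<Rightarrow> complex ring" where
  "zring N = \<lparr> carrier = Zzeta N, monoid.mult = (\<lambda>x y. x * y), one = 1,
               ring.zero = 0, add = (\<lambda>x y. x + y) \<rparr>"

abbreviation F2bar :: "bit alg_closure ring" where
  "F2bar \<equiv> ring_of_type_algebra"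

end

theory Submission imports Defs begin


lemma field_card_ge2: "card (UNIV :: 'a::{field,finite} set) \<ge> 2"
proof -
  have "{0, 1::'a} \<subseteq> UNIV" by simp
  hence "card {0,1::'a} \<le> card (UNIV :: 'a set)" by (intro card_mono) auto
  thus ?thesis by simp
qed

locale primfield =
  fixes \<alpha> :: "'a::{field,finite}" and T :: nat
  assumes T_def: "T = card (UNIV :: 'a set) - 1" and q_odd: "odd (card (UNIV :: 'a set))"
    and prim: "\<forall>x::'a. x \<noteq> 0 \<longrightarrow> (\<exists>n. x = \<alpha> ^ n)"
begin


lemma T_ge2: "T \<ge> 2" and T_even: "even T"
proof -
  have "card (UNIV :: 'a set) \<ge> 2" by (rule field_card_ge2)
  with q_odd have "card (UNIV :: 'a set) \<ge> 3" by presburger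
  thus "T \<ge> 2" by (simp add: T_def)
  show "even T" using q_odd field_card_ge2[where 'a='a] by (simp add: T_def)
qed

lemma alpha_nz: "\<alpha> \<noteq> 0"
proof
  assume a: "\<alpha> = 0"
  have "UNIV \<subseteq> {0, 1::'a}"
  proof
    fix x :: 'a
    show "x \<in> {0,1}"
    proof (cases "x = 0")
      case False
      then obtain n where "x = \<alpha> ^ n" using prim by blast
      thus ?thesis using a by (cases n) auto
    qed simp
  qed
  hence "card (UNIV :: 'a set) \<le> card {0, 1::'a}" by (intro card_mono) auto
  hence "card (UNIV :: 'a set) \<le> 2" by simp
  thus False using T_ge2 by (simp add: T_def)
qed

lemma pow_cancel: "\<alpha> ^ a = \<alpha> ^ b \<Longrightarrow> a < b \<Longrightarrow> \<alpha> ^ (b - a) = 1"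
proof -
  assume h: "\<alpha> ^ a = \<alpha> ^ b" "a < b"
  have "\<alpha> ^ b = \<alpha> ^ a * \<alpha> ^ (b - a)" using h(2) by (simp add: power_add[symmetric])
  with h(1) show ?thesis using alpha_nz by simp
qed

definition "d0 = (LEAST d. 0 < d \<and> \<alpha> ^ d = 1)"

lemma ex_period: "\<exists>d. 0 < d \<and> \<alpha> ^ d = 1"
proof -
  have "\<not> inj_on (\<lambda>n. \<alpha> ^ n) {..card (UNIV :: 'a set)}"
  proof
    assume "inj_on (\<lambda>n. \<alpha> ^ n) {..card (UNIV :: 'a set)}"
    hence "card {..card (UNIV :: 'a set)} \<le> card (UNIV :: 'a set)"
      by (rule card_inj_on_le) auto
    thus False by simp
  qed
  then obtain a b where ab: "a \<noteq> b" "\<alpha> ^ a = \<alpha> ^ b" unfolding inj_on_def by blast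
  show ?thesis
  proof (cases "a < b")
    case True thus ?thesis using pow_cancel[OF ab(2)] by (intro exI[of _ "b - a"]) auto
  next
    case False hence "b < a" using ab by simp
    thus ?thesis using pow_cancel[OF ab(2)[symmetric]] by (intro exI[of _ "a - b"]) auto
  qed
qed

lemma d0: "0 < d0" "\<alpha> ^ d0 = 1" "\<And>d. 0 < d \<Longrightarrow> d < d0 \<Longrightarrow> \<alpha> ^ d \<noteq> 1"
  using LeastI_ex[OF ex_period] not_less_Least[of _ "\<lambda>d. 0 < d \<and> \<alpha> ^ d = 1"]
  unfolding d0_def by auto

lemma pow_mod_d0: "\<alpha> ^ n = \<alpha> ^ (n mod d0)"
proof -
  have "\<alpha> ^ n = \<alpha> ^ (d0 * (n div d0) + n mod d0)" by (simp only: mult_div_mod_eq)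
  also have "\<dots> = (\<alpha> ^ d0) ^ (n div d0) * \<alpha> ^ (n mod d0)" by (simp only: power_add power_mult)
  finally have "\<alpha> ^ n = (\<alpha> ^ d0) ^ (n div d0) * \<alpha> ^ (n mod d0)" .
  thus ?thesis using d0 by simp
qed

lemma inj_d0: "inj_on (\<lambda>n. \<alpha> ^ n) {..<d0}"
proof (rule inj_onI)
  fix a b assume ab: "a \<in> {..<d0}" "b \<in> {..<d0}" "\<alpha> ^ a = \<alpha> ^ b"
  show "a = b"
  proof (rule ccontr)
    assume "a \<noteq> b"
    then consider "a < b" | "b < a" by linarith
    thus False
    proof cases
      case 1
      have "b - a < d0" "0 < b - a" using ab 1 by auto
      thus False using pow_cancel[OF ab(3) 1] d0(3)[of "b - a"] by blast
    next
      case 2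
      have "a - b < d0" "0 < a - b" using ab 2 by auto
      thus False using pow_cancel[OF ab(3)[symmetric] 2] d0(3)[of "a - b"] by blast
    qed
  qed
qed

lemma d0_eq: "d0 = T"
proof -
  have img: "(\<lambda>n. \<alpha> ^ n) ` {..<d0} = UNIV - {0}"
  proof
    show "(\<lambda>n. \<alpha> ^ n) ` {..<d0} \<subseteq> UNIV - {0}" using alpha_nz by auto
    show "UNIV - {0} \<subseteq> (\<lambda>n. \<alpha> ^ n) ` {..<d0}"
    proof
      fix x assume "x \<in> (UNIV :: 'a set) - {0}"
      then obtain n where "x = \<alpha> ^ n" using prim by blast
      hence "x = \<alpha> ^ (n mod d0)" using pow_mod_d0 by simp
      moreover have "n mod d0 < d0" using d0(1) by simp
      ultimately show "x \<in> (\<lambda>n. \<alpha> ^ n) ` {..<d0}" by blast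
    qed
  qed
  have "card ((\<lambda>n. \<alpha> ^ n) ` {..<d0}) = d0" using card_image[OF inj_d0] by simp
  moreover have "card ((UNIV :: 'a set) - {0}) = T" by (simp add: card_Diff_singleton T_def)
  ultimately show ?thesis using img by simp
qed

lemma alpha_T: "\<alpha> ^ T = 1" using d0 d0_eq by simp

lemma inj_T: "inj_on (\<lambda>n. \<alpha> ^ n) {..<T}" using inj_d0 d0_eq by simp

lemma img_T: "(\<lambda>n. \<alpha> ^ n) ` {..<T} = UNIV - {0}"
proof
  show "(\<lambda>n. \<alpha> ^ n) ` {..<T} \<subseteq> UNIV - {0}" using alpha_nz by auto
  show "UNIV - {0} \<subseteq> (\<lambda>n. \<alpha> ^ n) ` {..<T}"
  proof
    fix x assume "x \<in> (UNIV :: 'a set) - {0}"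
    then obtain n where "x = \<alpha> ^ n" using prim by blast
    hence "x = \<alpha> ^ (n mod T)" using pow_mod_d0 d0_eq by simp
    moreover have "n mod T < T" using T_ge2 by simp
    ultimately show "x \<in> (\<lambda>n. \<alpha> ^ n) ` {..<T}" by blast
  qed
qed

lemma pow_mod_T: "\<alpha> ^ n = \<alpha> ^ (n mod T)" using pow_mod_d0 d0_eq by simp

lemma dlog_pow: "dlog \<alpha> (\<alpha> ^ n) = n mod T"
  unfolding dlog_def
proof (rule Least_equality)
  show "\<alpha> ^ (n mod T) = \<alpha> ^ n" using pow_mod_T by simp
  fix m assume m: "\<alpha> ^ m = \<alpha> ^ n"
  show "n mod T \<le> m"
  proof (rule ccontr)
    assume "\<not> n mod T \<le> m"
    hence "m < n mod T" "n mod T < T" using T_ge2 by auto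
    moreover have "\<alpha> ^ m = \<alpha> ^ (n mod T)" using m pow_mod_T by simp
    ultimately have "m = n mod T" using inj_T unfolding inj_on_def by (meson lessThan_iff order.strict_trans)
    thus False using \<open>m < n mod T\<close> by simp
  qed
qed

lemma nz_pow: "x \<noteq> 0 \<Longrightarrow> \<alpha> ^ dlog \<alpha> x = x \<and> dlog \<alpha> x < T"
proof -
  assume "x \<noteq> 0"
  then obtain n where n: "x = \<alpha> ^ n" using prim by blast
  show ?thesis unfolding n dlog_pow using pow_mod_T[of n] T_ge2 by simp
qed

lemma mchar_pow: "c ^ T = 1 \<Longrightarrow> mchar \<alpha> c (\<alpha> ^ n) = c ^ n"
proof -
  assume c: "c ^ T = 1"
  have "c ^ n = c ^ (T * (n div T) + n mod T)" by (simp only: mult_div_mod_eq)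
  also have "\<dots> = (c ^ T) ^ (n div T) * c ^ (n mod T)" by (simp only: power_add power_mult)
  finally have "c ^ n = (c ^ T) ^ (n div T) * c ^ (n mod T)" .
  thus ?thesis using c alpha_nz unfolding mchar_def dlog_pow by simp
qed

lemma mchar_mult: "c ^ T = 1 \<Longrightarrow> mchar \<alpha> c (x * y) = mchar \<alpha> c x * mchar \<alpha> c y"
proof -
  assume c: "c ^ T = 1"
  show ?thesis
  proof (cases "x = 0 \<or> y = 0")
    case True thus ?thesis unfolding mchar_def by auto
  next
    case False
    then obtain a b where "x = \<alpha> ^ a" "y = \<alpha> ^ b" using prim by blast
    thus ?thesis using mchar_pow[OF c] by (simp add: power_add[symmetric])
  qed
qed

lemma mchar_one: "mchar \<alpha> c 1 = 1"
  using dlog_pow[of 0] unfolding mchar_def by simp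

lemma sq_iff: "y \<noteq> 0 \<Longrightarrow> (\<exists>z. z * z = y) \<longleftrightarrow> even (dlog \<alpha> y)"
proof -
  assume y: "y \<noteq> 0"
  show ?thesis
  proof
    assume "\<exists>z. z * z = y"
    then obtain z where z: "z * z = y" by blast
    hence "z \<noteq> 0" using y by auto
    then obtain a where "z = \<alpha> ^ a" using prim by blast
    hence "y = \<alpha> ^ (2 * a)" using z by (simp add: power_add[symmetric] mult_2)
    hence "dlog \<alpha> y = (2 * a) mod T" using dlog_pow by simp
    thus "even (dlog \<alpha> y)" using T_even by (simp add: dvd_mod_iff)
  next
    assume "even (dlog \<alpha> y)"
    then obtain m where m: "dlog \<alpha> y = 2 * m" by blast
    have "y = \<alpha> ^ (2 * m)" using nz_pow[OF y] m by simp
    thus "\<exists>z. z * z = y" by (intro exI[of _ "\<alpha> ^ m"]) (simp add: power_add[symmetric] mult_2)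
  qed
qed

lemma sum_univ: "(\<Sum>x\<in>UNIV. g x) = g 0 + (\<Sum>n<T. g (\<alpha> ^ n))"
proof -
  have U: "(UNIV :: 'a set) = insert 0 ((\<lambda>n. \<alpha> ^ n) ` {..<T})" using img_T by auto
  have "(\<Sum>x\<in>UNIV. g x) = g 0 + sum g ((\<lambda>n. \<alpha> ^ n) ` {..<T})"
    unfolding U by (subst sum.insert) (use alpha_nz in auto)
  also have "sum g ((\<lambda>n. \<alpha> ^ n) ` {..<T}) = (\<Sum>n<T. g (\<alpha> ^ n))"
    by (subst sum.reindex[OF inj_T]) simp
  finally show ?thesis .
qed


lemma rho_mchar: "rho \<alpha> = mchar \<alpha> (-1)"
proof -
  have "2 * complex_of_real pi * \<i> * complex_of_real (1 / 2) = complex_of_real pi * \<i>" by simp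
  thus ?thesis unfolding rho_def eta_def by simp
qed

lemma eta_mchar_mult: "eta \<alpha> r x * mchar \<alpha> z x = mchar \<alpha> (exp (2 * of_real pi * \<i> * of_real r) * z) x"
  unfolding eta_def mchar_def by (simp add: power_mult_distrib)

lemma reindex_uminus: "(\<Sum>x\<in>UNIV. g x) = (\<Sum>y\<in>UNIV. g (- y :: 'a))"
  by (rule sum.reindex_bij_witness[of UNIV "\<lambda>x. - x" "\<lambda>x. - x"]) auto

lemma reindex_oneminus: "(\<Sum>x\<in>UNIV. g x) = (\<Sum>y\<in>UNIV. g (1 - y :: 'a))"
  by (rule sum.reindex_bij_witness[of UNIV "\<lambda>x. 1 - x" "\<lambda>x. 1 - x"]) auto

lemma two_s:
  assumes "n < T"
  shows "(2::complex) * (if slce \<alpha> n then 1 else 0)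
     = 1 - mchar \<alpha> (-1) (\<alpha> ^ n + 1) - (if \<alpha> ^ n + 1 = 0 then 1 else 0)"
proof (cases "\<alpha> ^ n + 1 = 0")
  case True thus ?thesis unfolding slce_def mchar_def by simp
next
  case False
  hence m: "mchar \<alpha> (-1) (\<alpha> ^ n + 1) = (-1) ^ dlog \<alpha> (\<alpha> ^ n + 1)" unfolding mchar_def by simp
  have "slce \<alpha> n \<longleftrightarrow> odd (dlog \<alpha> (\<alpha> ^ n + 1))"
    unfolding slce_def using sq_iff[OF False] False by simp
  thus ?thesis using False m by (cases "even (dlog \<alpha> (\<alpha> ^ n + 1))") auto
qed

lemma key_identity:
  fixes c :: complex
  assumes cT: "c ^ T = 1" and c1: "c \<noteq> 1"
  shows "1 + Ksum \<alpha> (mchar \<alpha> c) = - mchar \<alpha> c (-1) * (2 * (\<Sum>n<T. if slce \<alpha> n then c ^ n else 0))"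
proof -
  let ?\<psi> = "mchar \<alpha> c" and ?\<rho> = "mchar \<alpha> (-1::complex)"
  have mT: "(-1::complex) ^ T = 1" using T_even by simp
  define S where "S = (\<Sum>n<T. if slce \<alpha> n then c ^ n else 0)"
  define K where "K = Ksum \<alpha> ?\<psi>"
  have "2 * S = (\<Sum>n<T. c ^ n * (2 * (if slce \<alpha> n then 1 else 0)))"
    unfolding S_def sum_distrib_left by (rule sum.cong) auto
  also have "\<dots> = (\<Sum>n<T. c ^ n - c ^ n * ?\<rho> (\<alpha> ^ n + 1) - (if \<alpha> ^ n + 1 = 0 then c ^ n else 0))"
    by (rule sum.cong) (auto simp: two_s algebra_simps)
  also have "\<dots> = (\<Sum>n<T. c ^ n) - (\<Sum>n<T. c ^ n * ?\<rho> (\<alpha> ^ n + 1)) - (\<Sum>n<T. if \<alpha> ^ n + 1 = 0 then c ^ n else 0)"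
    by (simp add: sum_subtractf)
  also have "(\<Sum>n<T. c ^ n) = 0" using c1 cT by (simp add: sum_gp_strict)
  also have "(\<Sum>n<T. c ^ n * ?\<rho> (\<alpha> ^ n + 1)) = ?\<psi> (-1) * K"
  proof -
    have "(\<Sum>n<T. c ^ n * ?\<rho> (\<alpha> ^ n + 1)) = (\<Sum>n<T. ?\<psi> (\<alpha> ^ n) * ?\<rho> (\<alpha> ^ n + 1))"
      using mchar_pow[OF cT] by simp
    also have "\<dots> = (\<Sum>x\<in>UNIV. ?\<psi> x * ?\<rho> (x + 1))"
      using sum_univ[of "\<lambda>x. ?\<psi> x * ?\<rho> (x + 1)"] by (simp add: mchar_def)
    also have "\<dots> = (\<Sum>y\<in>UNIV. ?\<psi> (- y) * ?\<rho> (- y + 1))" by (rule reindex_uminus)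
    also have "\<dots> = (\<Sum>y\<in>UNIV. ?\<psi> (-1) * (?\<rho> (1 - y) * ?\<psi> y))"
    proof (rule sum.cong)
      fix y :: 'a
      have "?\<psi> (- y) = ?\<psi> (-1) * ?\<psi> y" using mchar_mult[OF cT, of "-1" y] by simp
      thus "?\<psi> (- y) * ?\<rho> (- y + 1) = ?\<psi> (-1) * (?\<rho> (1 - y) * ?\<psi> y)" by (simp add: algebra_simps)
    qed simp
    also have "\<dots> = ?\<psi> (-1) * (\<Sum>y\<in>UNIV. ?\<rho> (1 - y) * ?\<psi> y)" by (simp add: sum_distrib_left)
    also have "(\<Sum>y\<in>UNIV. ?\<rho> (1 - y) * ?\<psi> y) = (\<Sum>x\<in>UNIV. ?\<rho> x * ?\<psi> (1 - x))"
      by (subst reindex_oneminus) simp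
    also have "\<dots> = K" unfolding K_def Ksum_def rho_mchar ..
    finally show ?thesis .
  qed
  also have "(\<Sum>n<T. if \<alpha> ^ n + 1 = 0 then c ^ n else 0) = ?\<psi> (-1)"
  proof -
    define n0 where "n0 = dlog \<alpha> (-1)"
    have n0: "\<alpha> ^ n0 = -1" "n0 < T" using nz_pow[of "-1"] unfolding n0_def by auto
    have "(\<Sum>n<T. if \<alpha> ^ n + 1 = 0 then c ^ n else 0) = (\<Sum>n<T. if n = n0 then c ^ n else 0)"
    proof (rule sum.cong)
      fix n assume "n \<in> {..<T}"
      hence "\<alpha> ^ n + 1 = 0 \<longleftrightarrow> n = n0"
        using n0 inj_T unfolding inj_on_def by (auto simp: add_eq_0_iff2)
      thus "(if \<alpha> ^ n + 1 = 0 then c ^ n else 0) = (if n = n0 then c ^ n else 0)" by simp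
    qed simp
    also have "\<dots> = c ^ n0" using n0 by simp
    also have "\<dots> = ?\<psi> (-1)" unfolding mchar_def n0_def by simp
    finally show ?thesis .
  qed
  finally have e: "2 * S = - ?\<psi> (-1) * K - ?\<psi> (-1)" by simp
  have u: "?\<psi> (-1) * ?\<psi> (-1) = 1" using mchar_mult[OF cT, of "-1" "-1"] mchar_one by simp
  have "- ?\<psi> (-1) * (2 * S) = ?\<psi> (-1) * ?\<psi> (-1) * (K + 1)" unfolding e by (simp add: algebra_simps)
  thus ?thesis using u unfolding S_def K_def by simp
qed
end


lemma char2_double: "(1::'b::comm_ring_1) + 1 = 0 \<Longrightarrow> x + x = (0::'b)"
proof -
  assume h: "(1::'b) + 1 = 0"
  have "x + x = (1 + 1) * x" by (simp add: distrib_right)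
  thus ?thesis using h by simp
qed

lemma pow2_sq: "(z::'b::comm_ring_1) ^ (2 ^ Suc h) = (z ^ (2 ^ h)) ^ 2"
proof -
  have "(2::nat) ^ Suc h = 2 ^ h * 2" by simp
  thus ?thesis by (simp only: power_mult)
qed

lemma char2_pow2: "(1::'b::comm_ring_1) + 1 = 0 \<Longrightarrow> (x + y) ^ (2 ^ h) = x ^ (2 ^ h) + (y::'b) ^ (2 ^ h)"
proof (induction h)
  case 0 thus ?case by simp
next
  case (Suc h)
  define a where "a = x ^ (2 ^ h)"
  define b where "b = y ^ (2 ^ h)"
  have sq: "(a + b) ^ 2 = a ^ 2 + b ^ 2 + (a * b + a * b)" by (simp add: power2_eq_square algebra_simps)
  have "(x + y) ^ (2 ^ Suc h) = ((x + y) ^ (2 ^ h)) ^ 2" by (rule pow2_sq)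
  also have "\<dots> = (a + b) ^ 2" using Suc by (simp add: a_def b_def)
  also have "\<dots> = a ^ 2 + b ^ 2" unfolding sq char2_double[OF Suc.prems] by simp
  also have "\<dots> = x ^ (2 ^ Suc h) + y ^ (2 ^ Suc h)" by (simp only: pow2_sq a_def b_def)
  finally show ?case .
qed

lemma poly_char2: "(1::'b::comm_ring_1) + 1 = 0 \<Longrightarrow> (1::'b poly) + 1 = 0"
proof -
  assume h: "(1::'b) + 1 = 0"
  show ?thesis by (simp only: poly_eq_iff coeff_add coeff_0 char2_double[OF h] simp_thms)
qed

lemma sum_split_at: "(M::nat) \<le> T \<Longrightarrow> sum f {..<T} = sum f {..<M} + (\<Sum>m<T - M. f (m + M))"
proof -
  assume MT: "M \<le> T"
  have e: "{..<T} = {..<M} \<union> {M..<T}" using MT by auto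
  have "sum f {..<T} = sum f ({..<M} \<union> {M..<T})" by (simp only: e)
  also have "\<dots> = sum f {..<M} + sum f {M..<T}" by (rule sum.union_disjoint) auto
  also have "{M..<T} = {0 + M..<(T - M) + M}" using MT by simp
  also have "sum f \<dots> = (\<Sum>m = 0..<T - M. f (m + M))" by (rule sum.shift_bounds_nat_ivl)
  also have "{0..<T - M} = {..<T - M}" by auto
  finally show ?thesis .
qed

lemma filt_zero:
  fixes \<beta> :: "'b::field" and q :: "'b poly"
  assumes c2: "(1::'b) + 1 = 0" and M: "0 < M" "M \<le> T"
    and S: "\<And>n. poly.coeff S n = (if n < M then 0 else poly.coeff q (n - M)) + \<beta> ^ M * poly.coeff q n"
    and ST: "\<And>n. n \<ge> T \<Longrightarrow> poly.coeff S n = 0"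
  shows "(\<Sum>n<T. if n mod M = r then poly.coeff S n * \<beta> ^ n else 0) = 0"
proof -
  have qz: "poly.coeff q m = 0" if "m \<ge> T - M" for m
  proof (rule ccontr)
    assume nz: "poly.coeff q m \<noteq> 0"
    hence qnz: "q \<noteq> 0" by auto
    define d where "d = Polynomial.degree q"
    have "m \<le> d" using nz le_degree unfolding d_def by blast
    have "poly.coeff q (d + M) = 0" using M(1) by (intro coeff_eq_0) (simp add: d_def)
    hence "poly.coeff S (d + M) = Polynomial.lead_coeff q" using S[of "d + M"] by (simp add: d_def)
    moreover have "poly.coeff S (d + M) = 0" using ST \<open>m \<le> d\<close> that by simp
    ultimately show False using qnz by simp
  qed
  define XX where "XX = (\<Sum>m<T - M. if m mod M = r then poly.coeff q m * \<beta> ^ m else 0)"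
  define a where "a n = (if n < M then 0 else poly.coeff q (n - M))" for n
  have "(\<Sum>n<T. if n mod M = r then poly.coeff S n * \<beta> ^ n else 0)
      = (\<Sum>n<T. if n mod M = r then a n * \<beta> ^ n else 0) + \<beta> ^ M * (\<Sum>n<T. if n mod M = r then poly.coeff q n * \<beta> ^ n else 0)"
  proof -
    have "(\<Sum>n<T. if n mod M = r then poly.coeff S n * \<beta> ^ n else 0)
      = (\<Sum>n<T. (if n mod M = r then a n * \<beta> ^ n else 0) + \<beta> ^ M * (if n mod M = r then poly.coeff q n * \<beta> ^ n else 0))"
      by (rule sum.cong) (auto simp: S a_def algebra_simps)
    thus ?thesis by (simp add: sum.distrib sum_distrib_left)
  qed
  also have "(\<Sum>n<T. if n mod M = r then a n * \<beta> ^ n else 0) = \<beta> ^ M * XX"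
  proof -
    have z: "(\<Sum>n<M. if n mod M = r then a n * \<beta> ^ n else 0) = 0" by (simp add: a_def)
    have "(\<Sum>m<T - M. if (m + M) mod M = r then a (m + M) * \<beta> ^ (m + M) else 0)
       = (\<Sum>m<T - M. \<beta> ^ M * (if m mod M = r then poly.coeff q m * \<beta> ^ m else 0))"
      by (rule sum.cong) (auto simp: a_def power_add)
    thus ?thesis
      unfolding sum_split_at[OF M(2), of "\<lambda>n. if n mod M = r then a n * \<beta> ^ n else 0"] XX_def z
      by (simp add: sum_distrib_left)
  qed
  also have "(\<Sum>n<T. if n mod M = r then poly.coeff q n * \<beta> ^ n else 0) = XX"
  proof -
    have TM: "T - M \<le> T" by simp
    show ?thesis
      unfolding sum_split_at[OF TM, of "\<lambda>n. if n mod M = r then poly.coeff q n * \<beta> ^ n else 0"] XX_def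
      using M by (simp, intro sum.neutral ballI) (simp add: qz)
  qed
  finally show ?thesis using char2_double[OF c2] by simp
qed



lemma map_poly_of_int_add: "map_poly (of_int :: int \<Rightarrow> complex) (p + q) = map_poly of_int p + map_poly of_int q"
  by (simp add: poly_eq_iff coeff_map_poly)

lemma map_poly_of_int_smult: "map_poly (of_int :: int \<Rightarrow> complex) (smult a q) = smult (of_int a) (map_poly of_int q)"
  by (simp add: poly_eq_iff coeff_map_poly)

lemma Zzeta_add: "x \<in> Zzeta N \<Longrightarrow> y \<in> Zzeta N \<Longrightarrow> x + y \<in> Zzeta N"
proof -
  assume "x \<in> Zzeta N" "y \<in> Zzeta N"
  then obtain p q where "x = poly (map_poly of_int p) (zeta N)" "y = poly (map_poly of_int q) (zeta N)"
    unfolding Zzeta_def by blast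
  hence "x + y = poly (map_poly of_int (p + q)) (zeta N)" by (simp add: map_poly_of_int_add)
  thus ?thesis unfolding Zzeta_def by blast
qed

lemma Zzeta_of_int: "of_int a \<in> Zzeta N"
proof -
  have "poly (map_poly of_int [:a:]) (zeta N) = of_int a" by (simp add: map_poly_pCons)
  thus ?thesis unfolding Zzeta_def by (metis (mono_tags, lifting) mem_Collect_eq)
qed

lemma Zzeta_zeta: "zeta N \<in> Zzeta N"
proof -
  have "poly (map_poly of_int [:0, 1:]) (zeta N) = zeta N" by (simp add: map_poly_pCons)
  thus ?thesis unfolding Zzeta_def by (metis (mono_tags, lifting) mem_Collect_eq)
qed

lemma Zzeta_smult: "y \<in> Zzeta N \<Longrightarrow> of_int a * y \<in> Zzeta N"
proof -
  assume "y \<in> Zzeta N"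
  then obtain q where "y = poly (map_poly of_int q) (zeta N)" unfolding Zzeta_def by blast
  hence "of_int a * y = poly (map_poly of_int (smult a q)) (zeta N)" by (simp add: map_poly_of_int_smult)
  thus ?thesis unfolding Zzeta_def by blast
qed

lemma Zzeta_shift: "y \<in> Zzeta N \<Longrightarrow> zeta N * y \<in> Zzeta N"
proof -
  assume "y \<in> Zzeta N"
  then obtain q where "y = poly (map_poly of_int q) (zeta N)" unfolding Zzeta_def by blast
  hence "zeta N * y = poly (map_poly of_int (pCons 0 q)) (zeta N)" by (simp add: map_poly_pCons)
  thus ?thesis unfolding Zzeta_def by blast
qed

lemma Zzeta_mult: "x \<in> Zzeta N \<Longrightarrow> y \<in> Zzeta N \<Longrightarrow> x * y \<in> Zzeta N"
proof -
  assume x: "x \<in> Zzeta N" and y: "y \<in> Zzeta N"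
  then obtain p where p: "x = poly (map_poly of_int p) (zeta N)" unfolding Zzeta_def by blast
  have "poly (map_poly of_int p) (zeta N) * y \<in> Zzeta N"
  proof (induction p)
    case (pCons a p)
    have "poly (map_poly of_int (pCons a p)) (zeta N) * y
        = of_int a * y + zeta N * (poly (map_poly of_int p) (zeta N) * y)"
      by (simp add: map_poly_pCons algebra_simps)
    thus ?case using pCons Zzeta_add Zzeta_smult[OF y] Zzeta_shift by simp
  qed (use Zzeta_of_int[of 0 N] in simp)
  thus ?thesis using p by simp
qed

lemma Zzeta_uminus: "x \<in> Zzeta N \<Longrightarrow> - x \<in> Zzeta N"
  using Zzeta_smult[of x N "-1"] by simp

lemma Zzeta_power: "x \<in> Zzeta N \<Longrightarrow> x ^ n \<in> Zzeta N"
  by (induction n) (use Zzeta_of_int[of 1 N] Zzeta_mult in auto)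

lemma Zzeta_sub: "zeta k \<in> Zzeta N \<Longrightarrow> Zzeta k \<subseteq> Zzeta N"
proof
  fix x assume z: "zeta k \<in> Zzeta N" and "x \<in> Zzeta k"
  then obtain p where p: "x = poly (map_poly of_int p) (zeta k)" unfolding Zzeta_def by blast
  have "poly (map_poly of_int p) (zeta k) \<in> Zzeta N"
  proof (induction p)
    case (pCons a p)
    have "poly (map_poly of_int (pCons a p)) (zeta k)
        = of_int a + zeta k * poly (map_poly of_int p) (zeta k)"
      by (simp add: map_poly_pCons)
    thus ?case using pCons Zzeta_add Zzeta_mult[OF z] Zzeta_of_int by simp
  qed (use Zzeta_of_int[of 0 N] in simp)
  thus "x \<in> Zzeta N" using p by simp
qed

lemma zeta_pow: "0 < a \<Longrightarrow> zeta (a * b) ^ a = zeta b"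
proof -
  assume a: "0 < a"
  have "zeta (a * b) ^ a = exp (of_nat a * (2 * of_real pi * \<i> / of_nat (a * b)))"
    by (simp only: zeta_def exp_of_nat_mult)
  also have "of_nat a * (2 * of_real pi * \<i> / of_nat (a * b)) = 2 * of_real pi * \<i> / (of_nat b :: complex)"
    using a by (cases "b = 0") (auto simp: field_simps)
  finally show ?thesis unfolding zeta_def .
qed


lemma zring_simps [simp]:
  "carrier (zring N) = Zzeta N"
  "monoid.mult (zring N) = (\<lambda>x y. x * y)"
  "ring.add (zring N) = (\<lambda>x y. x + y)"
  "monoid.one (zring N) = 1"
  "ring.zero (zring N) = 0"
  unfolding zring_def by simp_all

lemma zideal_zero: "ideal I (zring N) \<Longrightarrow> (0::complex) \<in> I"
  using additive_subgroup.zero_closed[OF ideal.axioms(1)] by fastforce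

lemma zideal_add: "ideal I (zring N) \<Longrightarrow> a \<in> I \<Longrightarrow> b \<in> I \<Longrightarrow> a + b \<in> I"
  using additive_subgroup.a_closed[OF ideal.axioms(1)] by fastforce

lemma zideal_lmult: "ideal I (zring N) \<Longrightarrow> a \<in> I \<Longrightarrow> x \<in> Zzeta N \<Longrightarrow> x * a \<in> I"
  using ideal.I_l_closed by fastforce

lemma zideal_sum:
  assumes I: "ideal I (zring N)" and "finite A" and "\<And>r. r \<in> A \<Longrightarrow> f r \<in> I"
  shows "sum f A \<in> I"
  using assms(2,3)
proof (induction A rule: finite_induct)
  case empty thus ?case using zideal_zero[OF I] by simp
next
  case (insert x F) thus ?case using zideal_add[OF I] by simp
qed

lemma zideal_sub: "ideal I (zring N) \<Longrightarrow> I \<subseteq> Zzeta N"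
  using additive_subgroup.a_subset[OF ideal.axioms(1)] by fastforce



theorem mainTheorem7:
  fixes \<alpha> :: "'a::{field,finite}"
    and \<beta> :: "bit alg_closure"
    and k h :: nat
    and P :: "complex set"
    and \<phi> :: "bit alg_closure \<Rightarrow> complex set"
    and \<zeta> :: complex
  assumes q_odd: "odd (card (UNIV :: 'a set))"
    and prim: "\<forall>x::'a. x \<noteq> 0 \<longrightarrow> (\<exists>n. x = \<alpha> ^ n)"
    and beta_T: "\<beta> ^ (card (UNIV :: 'a set) - 1) = 1"
    and k_ord: "\<beta> ^ k = 1" "\<forall>d. 0 < d \<and> d < k \<longrightarrow> \<beta> ^ d \<noteq> 1"
    and k_gt: "k > 1"
    and P_prime: "primeideal P (zring k)"
    and P_two: "2 \<in> P"
    and phi_iso: "\<phi> \<in> ring_iso (F2bar \<lparr> carrier := generate_field F2bar {\<beta>} \<rparr>) (zring k Quot P)"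
    and zeta_root: "\<zeta> ^ k = 1"
    and phi_beta: "\<phi> \<beta> = a_r_coset (zring k) P \<zeta>"
    and h_ge: "1 \<le> h"
    and h_le: "h \<le> multiplicity 2 (card (UNIV :: 'a set) - 1)"
    and mult: "Polynomial.order \<beta> (map_poly to_ac (slce_poly \<alpha>)) \<ge> 2 ^ h"
  shows "\<forall>j < 2 ^ h. 1 + Ksum \<alpha> (\<lambda>x. eta \<alpha> (real j / 2 ^ h) x * mchar \<alpha> \<zeta> x)
           \<in> genideal (zring (2 ^ h * k)) ((\<lambda>x. 2 * x) ` P)"
proof -
  define T where "T = card (UNIV :: 'a set) - 1"
  define M where "M = (2::nat) ^ h"
  define F where "F = generate_field F2bar {\<beta>}"
  define R where "R = F2bar\<lparr>carrier := F\<rparr>"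
  define Q where "Q = zring k Quot P"
  interpret pf: primfield \<alpha> T using q_odd prim by unfold_locales (simp_all add: T_def)
  have idP: "ideal P (zring k)" using P_prime by (rule primeideal.axioms(1))
  have ringk: "ring (zring k)" using idP by (rule ideal.axioms(2))
  have PZ: "P \<subseteq> Zzeta k" using zideal_sub[OF idP] .
  have hom: "\<phi> \<in> ring_hom R Q" and bij: "bij_betw \<phi> F (carrier Q)"
    using phi_iso unfolding ring_iso_def R_def Q_def F_def by auto
  have R_simps: "carrier R = F" "\<And>x y. x \<otimes>\<^bsub>R\<^esub> y = x * y" "\<And>x y. x \<oplus>\<^bsub>R\<^esub> y = x + y" "\<one>\<^bsub>R\<^esub> = 1"
    unfolding R_def ring_of_type_algebra_def by simp_all
  have Q_simps: "carrier Q = a_rcosets\<^bsub>zring k\<^esub> P" "\<And>x y. x \<otimes>\<^bsub>Q\<^esub> y = rcoset_mult (zring k) P x y"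
     "\<And>x y. x \<oplus>\<^bsub>Q\<^esub> y = x <+>\<^bsub>zring k\<^esub> y" "\<one>\<^bsub>Q\<^esub> = P +>\<^bsub>zring k\<^esub> 1"
    unfolding Q_def FactRing_def by simp_all
  have c2: "(1::bit alg_closure) + 1 = 0"
  proof -
    have "(1::bit alg_closure) + 1 = to_ac ((1::bit) + 1)" by (simp only: to_ac_add to_ac_1)
    also have "(1::bit) + 1 = 0" by simp
    finally show ?thesis by simp
  qed
  have Fb: "\<beta> \<in> F" unfolding F_def by (rule generate_field.incl) simp
  have F1: "1 \<in> F" unfolding F_def using generate_field.one[of F2bar "{\<beta>}"] by (simp add: ring_of_type_algebra_def)
  have Fadd: "x + y \<in> F" if "x \<in> F" "y \<in> F" for x y
    using generate_field.eng_add[of x F2bar "{\<beta>}" y] that unfolding F_def by (simp add: ring_of_type_algebra_def)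
  have Fmult: "x * y \<in> F" if "x \<in> F" "y \<in> F" for x y
    using generate_field.eng_mult[of x F2bar "{\<beta>}" y] that unfolding F_def by (simp add: ring_of_type_algebra_def)
  have F0: "0 \<in> F" using Fadd[OF F1 F1] c2 by simp
  have Fpow: "\<beta> ^ n \<in> F" for n by (induction n) (use F1 Fmult Fb in auto)
  have phi_add: "\<phi> (x + y) = \<phi> x <+>\<^bsub>zring k\<^esub> \<phi> y" if "x \<in> F" "y \<in> F" for x y
    using ring_hom_add[OF hom, of x y] that R_simps Q_simps by simp
  have phi_mult: "\<phi> (x * y) = rcoset_mult (zring k) P (\<phi> x) (\<phi> y)" if "x \<in> F" "y \<in> F" for x y
    using ring_hom_mult[OF hom, of x y] that R_simps Q_simps by simp
  have phi_one: "\<phi> 1 = P +>\<^bsub>zring k\<^esub> 1" using ring_hom_one[OF hom] R_simps Q_simps by simp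
  have Z1: "(1::complex) \<in> Zzeta k" using Zzeta_of_int[of 1 k] by simp
  have phi_zero: "\<phi> 0 = P"
  proof -
    have "\<phi> 0 = \<phi> (1 + 1)" using c2 by simp
    also have "\<dots> = (P +>\<^bsub>zring k\<^esub> 1) <+>\<^bsub>zring k\<^esub> (P +>\<^bsub>zring k\<^esub> 1)" using phi_add[OF F1 F1] phi_one by simp
    also have "\<dots> = P +>\<^bsub>zring k\<^esub> 2" using ideal.a_rcos_sum[OF idP, of 1 1] Z1 by simp
    also have "\<dots> = P" using ring.a_rcos_zero[OF ringk idP P_two] .
    finally show ?thesis .
  qed
  have zetaZ: "\<zeta> \<in> Zzeta k"
  proof -
    have "\<phi> \<beta> \<in> carrier Q" using ring_hom_closed[OF hom, of \<beta>] Fb R_simps by simp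
    then obtain a where a: "a \<in> Zzeta k" "P +>\<^bsub>zring k\<^esub> \<zeta> = P +>\<^bsub>zring k\<^esub> a"
      using phi_beta unfolding Q_simps A_RCOSETS_def' by auto
    have "\<zeta> \<in> P +>\<^bsub>zring k\<^esub> \<zeta>" using zideal_zero[OF idP] unfolding a_r_coset_def' by force
    hence "\<zeta> \<in> P +>\<^bsub>zring k\<^esub> a" using a by simp
    then obtain p where "p \<in> P" "\<zeta> = p + a" unfolding a_r_coset_def' by auto
    thus ?thesis using PZ a Zzeta_add by blast
  qed
  have phi_pow: "\<phi> (\<beta> ^ n) = P +>\<^bsub>zring k\<^esub> (\<zeta> ^ n)" for n
  proof (induction n)
    case 0 thus ?case using phi_one by simp
  next
    case (Suc n)
    have "\<phi> (\<beta> ^ Suc n) = rcoset_mult (zring k) P (\<phi> \<beta>) (\<phi> (\<beta> ^ n))" using phi_mult[OF Fb Fpow] by simp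
    also have "\<dots> = P +>\<^bsub>zring k\<^esub> (\<zeta> * \<zeta> ^ n)"
      using ideal.rcoset_mult_add[OF idP, of \<zeta> "\<zeta> ^ n"] Suc phi_beta zetaZ Zzeta_power[OF zetaZ] by simp
    finally show ?case by simp
  qed
  have transfer: "(\<Sum>n<N. if Qp n then \<beta> ^ n else 0) \<in> F \<and> (\<Sum>n<N. if Qp n then \<zeta> ^ n else 0) \<in> Zzeta k \<and>
      \<phi> (\<Sum>n<N. if Qp n then \<beta> ^ n else 0) = P +>\<^bsub>zring k\<^esub> (\<Sum>n<N. if Qp n then \<zeta> ^ n else 0)" for Qp N
  proof (induction N)
    case 0 thus ?case using F0 phi_zero ring.a_rcos_zero[OF ringk idP zideal_zero[OF idP]] Zzeta_of_int[of 0 k] by simp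
  next
    case (Suc N)
    show ?case
    proof (cases "Qp N")
      case False thus ?thesis using Suc by simp
    next
      case True
      have "\<phi> ((\<Sum>n<N. if Qp n then \<beta> ^ n else 0) + \<beta> ^ N)
          = (P +>\<^bsub>zring k\<^esub> (\<Sum>n<N. if Qp n then \<zeta> ^ n else 0)) <+>\<^bsub>zring k\<^esub> (P +>\<^bsub>zring k\<^esub> \<zeta> ^ N)"
        using phi_add[of _ "\<beta> ^ N"] Suc Fpow phi_pow by simp
      also have "\<dots> = P +>\<^bsub>zring k\<^esub> ((\<Sum>n<N. if Qp n then \<zeta> ^ n else 0) + \<zeta> ^ N)"
        using ideal.a_rcos_sum[OF idP] Suc Zzeta_power[OF zetaZ] by simp
      finally show ?thesis using True Suc Fadd Fpow Zzeta_add Zzeta_power[OF zetaZ] by simp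
    qed
  qed
  have T2: "T \<ge> 2" "even T" using pf.T_ge2 pf.T_even by auto
  have M_pos: "0 < M" unfolding M_def by simp
  have M_even: "even M" using h_ge unfolding M_def by (cases h) auto
  have MT: "M dvd T"
  proof -
    have "T \<noteq> 0" using T2 by simp
    hence "(2::nat) ^ h dvd T \<longleftrightarrow> h \<le> multiplicity 2 T" by (intro power_dvd_iff_le_multiplicity) auto
    thus ?thesis using h_le unfolding M_def T_def by simp
  qed
  have M_le_T: "M \<le> T" using MT T2 by (simp add: dvd_imp_le)
  have kT: "k dvd T"
  proof -
    have "\<beta> ^ T = \<beta> ^ (k * (T div k) + T mod k)" by (simp only: mult_div_mod_eq)
    also have "\<dots> = (\<beta> ^ k) ^ (T div k) * \<beta> ^ (T mod k)" by (simp only: power_add power_mult)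
    finally have "\<beta> ^ (T mod k) = 1" using beta_T k_ord(1) unfolding T_def by simp
    moreover have "T mod k < k" using k_gt by simp
    ultimately have "T mod k = 0" using k_ord(2) by (metis neq0_conv)
    thus ?thesis by (simp add: dvd_eq_mod_eq_0)
  qed
  define St where "St = map_poly to_ac (slce_poly \<alpha>)"
  have coeffS: "poly.coeff St n = (if n < T \<and> slce \<alpha> n then 1 else 0)" for n
  proof -
    have "poly.coeff (slce_poly \<alpha>) n = (\<Sum>m<T. if m = n then (if slce \<alpha> m then 1 else 0) else 0)"
      unfolding slce_poly_def T_def[symmetric] coeff_sum by (rule sum.cong) (auto simp: Polynomial.coeff_monom)
    also have "\<dots> = (if n < T \<and> slce \<alpha> n then 1 else 0)" by (subst sum.delta) auto
    finally show ?thesis unfolding St_def by (simp add: coeff_map_poly)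
  qed
  have dv: "[:-\<beta>, 1:] ^ M dvd St" using mult order_divides unfolding St_def M_def by blast
  then obtain q where q: "St = [:-\<beta>,1:] ^ M * q" by (elim dvdE)
  have pw: "[:-\<beta>, 1:] ^ M = Polynomial.monom 1 M + [:\<beta> ^ M:]"
  proof -
    have "[:-\<beta>, 1:] = [:0,1:] + [:-\<beta>:]" by simp
    hence "[:-\<beta>,1:] ^ M = [:0,1:] ^ M + [:-\<beta>:] ^ M"
      using char2_pow2[OF poly_char2[OF c2], of "[:0,1:]" "[:-\<beta>:]" h] unfolding M_def by simp
    also have "[:0,1:] ^ M = Polynomial.monom (1::bit alg_closure) M" by (simp add: monom_altdef)
    also have "[:-\<beta>:] ^ M = [:\<beta> ^ M:]" using M_even by (simp add: poly_const_pow)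
    finally show ?thesis .
  qed
  have coeffS2: "poly.coeff St n = (if n < M then 0 else poly.coeff q (n - M)) + \<beta> ^ M * poly.coeff q n" for n
    unfolding q pw by (simp add: distrib_right coeff_monom_mult)
  have Bzero: "(\<Sum>n<T. if n mod M = r \<and> slce \<alpha> n then \<beta> ^ n else 0) = 0" for r
  proof -
    have "(\<Sum>n<T. if n mod M = r then poly.coeff St n * \<beta> ^ n else 0) = 0"
      by (rule filt_zero[OF c2 M_pos M_le_T coeffS2]) (simp add: coeffS)
    moreover have "(\<Sum>n<T. if n mod M = r then poly.coeff St n * \<beta> ^ n else 0)
        = (\<Sum>n<T. if n mod M = r \<and> slce \<alpha> n then \<beta> ^ n else 0)"
      by (rule sum.cong) (auto simp: coeffS)
    ultimately show ?thesis by simp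
  qed
  define A where "A r = (\<Sum>n<T. if n mod M = r \<and> slce \<alpha> n then \<zeta> ^ n else 0)" for r
  have AP: "A r \<in> P" for r
  proof -
    from transfer[of "\<lambda>n. n mod M = r \<and> slce \<alpha> n" T] Bzero[of r] phi_zero
    have "P +>\<^bsub>zring k\<^esub> A r = P" and "A r \<in> Zzeta k" unfolding A_def by auto
    thus ?thesis using ideal.rcos_const_imp_mem[OF idP] by simp
  qed
  show ?thesis
  proof (intro allI impI)
    fix j :: nat assume j: "j < 2 ^ h"
    define \<omega> where "\<omega> = exp (2 * of_real pi * \<i> * of_real (real j / 2 ^ h))"
    define c where "c = \<omega> * \<zeta>"
    have om_zeta: "\<omega> = zeta M ^ j"
    proof -
      have "zeta M ^ j = exp (of_nat j * (2 * of_real pi * \<i> / of_nat M))"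
        by (simp only: zeta_def exp_of_nat_mult)
      also have "of_nat j * (2 * of_real pi * \<i> / of_nat M) = 2 * of_real pi * \<i> * of_real (real j / 2 ^ h)"
        unfolding M_def by simp
      finally show ?thesis unfolding \<omega>_def by simp
    qed
    have omM: "\<omega> ^ M = 1"
    proof -
      have "zeta M ^ M = 1" unfolding zeta_def using M_pos
        by (simp only: exp_of_nat_mult[symmetric]) (simp add: field_simps)
      thus ?thesis unfolding om_zeta by (simp add: power_mult[symmetric] mult.commute power_mult)
    qed
    have om_mod: "\<omega> ^ n = \<omega> ^ (n mod M)" for n
    proof -
      have "\<omega> ^ n = \<omega> ^ (M * (n div M) + n mod M)" by (simp only: mult_div_mod_eq)
      also have "\<dots> = (\<omega> ^ M) ^ (n div M) * \<omega> ^ (n mod M)" by (simp only: power_add power_mult)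
      finally show ?thesis using omM by simp
    qed
    have cT: "c ^ T = 1"
    proof -
      have "\<omega> ^ T = 1" using om_mod[of T] MT by simp
      moreover have "\<zeta> ^ T = 1"
      proof -
        have "\<zeta> ^ T = \<zeta> ^ (k * (T div k))" using kT by simp
        also have "\<dots> = 1" using zeta_root by (simp only: power_mult) simp
        finally show ?thesis .
      qed
      ultimately show ?thesis unfolding c_def by (simp add: power_mult_distrib)
    qed
    have c1: "c \<noteq> 1"
    proof
      assume c: "c = 1"
      have "\<zeta> ^ M = c ^ M" unfolding c_def using omM by (simp add: power_mult_distrib)
      hence zM: "\<zeta> ^ M = 1" using c by simp
      have "\<phi> (\<beta> ^ M) = \<phi> 1" using phi_pow[of M] phi_one zM by simp
      hence bM: "\<beta> ^ M = 1" using bij Fpow F1 unfolding bij_betw_def inj_on_def by blast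
      have "(\<beta> + 1) ^ M = \<beta> ^ M + 1 ^ M" using char2_pow2[OF c2] unfolding M_def by blast
      hence "(\<beta> + 1) ^ M = 0" using bM c2 by simp
      hence "\<beta> + 1 = 0" by simp
      hence "\<beta> + 1 = 1 + 1" using c2 by simp
      hence "\<beta> = 1" by simp
      thus False using k_ord(2) k_gt by auto
    qed
    have fun_eq: "(\<lambda>x. eta \<alpha> (real j / 2 ^ h) x * mchar \<alpha> \<zeta> x) = mchar \<alpha> c"
      unfolding c_def \<omega>_def using pf.eta_mchar_mult by auto
    have key: "1 + Ksum \<alpha> (mchar \<alpha> c) = - mchar \<alpha> c (-1) * (2 * (\<Sum>n<T. if slce \<alpha> n then c ^ n else 0))"
      using pf.key_identity[OF cT c1] .
    have group: "(\<Sum>n<T. if slce \<alpha> n then c ^ n else 0) = (\<Sum>r<M. \<omega> ^ r * A r)"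
    proof -
      have "(\<Sum>n<T. if slce \<alpha> n then c ^ n else 0)
          = (\<Sum>n<T. \<Sum>r<M. if n mod M = r then (if slce \<alpha> n then c ^ n else 0) else 0)"
        by (rule sum.cong) (auto simp: sum.delta' M_pos)
      also have "\<dots> = (\<Sum>r<M. \<Sum>n<T. if n mod M = r then (if slce \<alpha> n then c ^ n else 0) else 0)"
        by (rule sum.swap)
      also have "\<dots> = (\<Sum>r<M. \<omega> ^ r * A r)"
      proof (rule sum.cong)
        fix r assume "r \<in> {..<M}"
        show "(\<Sum>n<T. if n mod M = r then (if slce \<alpha> n then c ^ n else 0) else 0) = \<omega> ^ r * A r"
          unfolding A_def sum_distrib_left
        proof (rule sum.cong)
          fix n assume "n \<in> {..<T}"
          show "(if n mod M = r then (if slce \<alpha> n then c ^ n else 0) else 0)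
              = \<omega> ^ r * (if n mod M = r \<and> slce \<alpha> n then \<zeta> ^ n else 0)"
          proof (cases "n mod M = r")
            case True
            hence "\<omega> ^ n = \<omega> ^ r" using om_mod[of n] by simp
            thus ?thesis using True unfolding c_def by (simp add: power_mult_distrib)
          qed simp
        qed simp
      qed simp
      finally show ?thesis .
    qed
    have eq: "1 + Ksum \<alpha> (\<lambda>x. eta \<alpha> (real j / 2 ^ h) x * mchar \<alpha> \<zeta> x)
        = (\<Sum>r<M. (- mchar \<alpha> c (-1) * \<omega> ^ r) * (2 * A r))"
      unfolding fun_eq key group by (simp add: sum_distrib_left mult_ac)
    have NM: "2 ^ h * k = M * k" unfolding M_def ..
    have zk: "Zzeta k \<subseteq> Zzeta (M * k)"
      by (rule Zzeta_sub) (use zeta_pow[OF M_pos, of k] Zzeta_power[OF Zzeta_zeta] in metis)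
    have zM: "zeta M \<in> Zzeta (M * k)"
      using zeta_pow[of k M] k_gt Zzeta_power[OF Zzeta_zeta, of "k * M" k] by (simp add: mult.commute)
    have omZ: "\<omega> \<in> Zzeta (M * k)" unfolding om_zeta using Zzeta_power[OF zM] .
    have cZ: "c \<in> Zzeta (M * k)" unfolding c_def using Zzeta_mult omZ zetaZ zk by blast
    have psiZ: "- mchar \<alpha> c (-1) * \<omega> ^ r \<in> Zzeta (M * k)" for r
      unfolding mchar_def using Zzeta_mult Zzeta_uminus Zzeta_power cZ omZ by simp
    show "1 + Ksum \<alpha> (\<lambda>x. eta \<alpha> (real j / 2 ^ h) x * mchar \<alpha> \<zeta> x)
           \<in> genideal (zring (2 ^ h * k)) ((\<lambda>x. 2 * x) ` P)"
      unfolding genideal_def eq NM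
    proof (rule InterI)
      fix I assume "I \<in> {I. ideal I (zring (M * k)) \<and> (\<lambda>x. 2 * x) ` P \<subseteq> I}"
      hence I: "ideal I (zring (M * k))" "(\<lambda>x. 2 * x) ` P \<subseteq> I" by auto
      show "(\<Sum>r<M. (- mchar \<alpha> c (-1) * \<omega> ^ r) * (2 * A r)) \<in> I"
      proof (rule zideal_sum[OF I(1)])
        fix r
        have "2 * A r \<in> I" using I(2) AP[of r] by auto
        thus "(- mchar \<alpha> c (-1) * \<omega> ^ r) * (2 * A r) \<in> I" using zideal_lmult[OF I(1) _ psiZ] by blast
      qed simp
    qed
  qed
qed


end
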